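(* Let $\langle A,\to\rangle$ be a conditional algebra. Then the Stone map $\varphi\colon A\to\mathcal{P}(\mathrm{Ul}(A))$, $\varphi(a)=\{u\in\mathrm{Ul}(A): a\in u\}$, is an embedding of $\langle A,\to\rangle$ into $\mathrm{Em}(A)=\langle \mathcal{P}(\mathrm{Ul}(A)),\to_{T_A}\rangle$. That is, $\varphi$ is an injective Boolean homomorphism and $\varphi(a\to b)=\varphi(a)\to_{T_A}\varphi(b)$ for all $a,b\in A$.
   Context: A conditional algebra is a pair $\langle A,\to\rangle$ where $A$ is a Boolean algebra and $\to$ is a binary operation on $A$ such that for all $a,b,c$: $a\to 1=1$; $(a\to b)\wedge(a\to c)=a\to(b\wedge c)$; $(a\vee b)\to c\le (a\to c)\wedge(b\to c)$. Filters of $A$ include the improper filter $A$; $\mathrm{Ul}(A)$ is the set of ultrafilters. For a filter $F$, $\varphi(F)=\{u\in\mathrm{Ul}(A):F\subseteq u\}$ (so $\varphi(A)=\emptyset$). For $X,Y\subseteq A$, $D^{\to}_X(Y)=\{b\in A:\exists a\in Y,\ a\to b\in X\}$. The relation $T_A\subseteq \mathrm{Ul}(A)\times\mathcal{P}(\mathrm{Ul}(A))\times\mathrm{Ul}(A)$ is defined by: $T_A(u,Z,v)$ iff there is a filter $F$ of $A$ with $Z=\varphi(F)$ and $D^{\to}_u(F)\subseteq v$. Write $T_A(u,Z)=\{v: T_A(u,Z,v)\}$. For $U,V\subseteq \mathrm{Ul}(A)$, $U\to_{T_A}V=\{u\in\mathrm{Ul}(A): \text{for all } Z\subseteq U,\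 T_A(u,Z)\subseteq V\}$. *)

theory Defs
  imports Main
begin

definition conditional_algebra :: "('a::boolean_algebra \<Rightarrow> 'a \<Rightarrow> 'a) \<Rightarrow> bool" where
  "conditional_algebra imp \<longleftrightarrow>
     (\<forall>a. imp a top = top) \<and>
     (\<forall>a b c. inf (imp a b) (imp a c) = imp a (inf b c)) \<and>
     (\<forall>a b c. imp (sup a b) c \<le> inf (imp a c) (imp b c))"

text \<open>Filters (the improper filter UNIV included).\<close>
definition ba_filter :: "'a::boolean_algebra set \<Rightarrow> bool" where
  "ba_filter F \<longleftrightarrow> top \<in> F \<and> (\<forall>a\<in>F. \<forall>b. a \<le> b \<longrightarrow> b \<in> F) \<and>
     (\<forall>a\<in>F. \<forall>b\<in>F. inf a b \<in> F)"

definition ultrafilters :: "'a::boolean_algebra set set" where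
  "ultrafilters = {u. ba_filter u \<and> u \<noteq> UNIV \<and>
     (\<forall>G. ba_filter G \<and> G \<noteq> UNIV \<and> u \<subseteq> G \<longrightarrow> G = u)}"

definition phiF :: "'a::boolean_algebra set \<Rightarrow> 'a set set" where
  "phiF F = {u \<in> ultrafilters. F \<subseteq> u}"

definition stone :: "'a::boolean_algebra \<Rightarrow> 'a set set" where
  "stone a = {u \<in> ultrafilters. a \<in> u}"

definition Dimp :: "('a \<Rightarrow> 'a \<Rightarrow> 'a) \<Rightarrow> 'a set \<Rightarrow> 'a set \<Rightarrow> 'a set" where
  "Dimp imp X Y = {b. \<exists>a\<in>Y. imp a b \<in> X}"

definition T_rel :: "('a::boolean_algebra \<Rightarrow> 'a \<Rightarrow> 'a) \<Rightarrow> 'a set \<Rightarrow> 'a set set \<Rightarrow> 'a set \<Rightarrow> bool" where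
  "T_rel imp u Z v \<longleftrightarrow> u \<in> ultrafilters \<and> v \<in> ultrafilters \<and>
     (\<exists>F. ba_filter F \<and> Z = phiF F \<and> Dimp imp u F \<subseteq> v)"

definition T_img :: "('a::boolean_algebra \<Rightarrow> 'a \<Rightarrow> 'a) \<Rightarrow> 'a set \<Rightarrow> 'a set set \<Rightarrow> 'a set set" where
  "T_img imp u Z = {v. T_rel imp u Z v}"

definition imp_T :: "('a::boolean_algebra \<Rightarrow> 'a \<Rightarrow> 'a) \<Rightarrow> 'a set set \<Rightarrow> 'a set set \<Rightarrow> 'a set set" where
  "imp_T imp U V = {u \<in> ultrafilters. \<forall>Z. Z \<subseteq> U \<longrightarrow> T_img imp u Z \<subseteq> V}"

end

theory Submission
  imports Defs
begin

lemma filter_up: "ba_filter F \<Longrightarrow> a \<in> F \<Longrightarrow> a \<le> b \<Longrightarrow> b \<in> F"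
  unfolding ba_filter_def by blast

lemma filter_inf: "ba_filter F \<Longrightarrow> a \<in> F \<Longrightarrow> b \<in> F \<Longrightarrow> inf a b \<in> F"
  unfolding ba_filter_def by blast

lemma filter_top: "ba_filter F \<Longrightarrow> top \<in> F"
  unfolding ba_filter_def by blast

lemma filter_inf_iff: "ba_filter F \<Longrightarrow> inf a b \<in> F \<longleftrightarrow> a \<in> F \<and> b \<in> F"
  by (meson filter_inf filter_up inf.cobounded1 inf.cobounded2)

lemma principal_filter: "ba_filter {x. (a::'a::boolean_algebra) \<le> x}"
  unfolding ba_filter_def by auto

lemma ext_filter:
  fixes F :: "'a::boolean_algebra set"
  assumes "ba_filter F" "b \<notin> F"
  shows "\<exists>M. ba_filter M \<and> F \<subseteq> M \<and> b \<notin> M \<and> (\<forall>c. c \<notin> M \<longrightarrow> -c \<in> M)"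
proof -
  define A where "A = {G. ba_filter G \<and> F \<subseteq> G \<and> b \<notin> G}"
  have "A \<noteq> {}" using assms unfolding A_def by blast
  moreover have "\<Union>C \<in> A" if "C \<noteq> {}" "subset.chain A C" for C
  proof -
    have CA: "C \<subseteq> A" and ch: "\<forall>x\<in>C. \<forall>y\<in>C. x \<subseteq> y \<or> y \<subseteq> x"
      using that(2) unfolding subset.chain_def by auto
    have "ba_filter (\<Union>C)"
      unfolding ba_filter_def
    proof (intro conjI ballI allI impI)
      from that(1) obtain G where "G \<in> C" by blast
      then show "top \<in> \<Union>C" using CA filter_top unfolding A_def by blast
    next
      fix x y assume "x \<in> \<Union>C" "x \<le> y"
      then show "y \<in> \<Union>C" using CA unfolding A_def by (auto intro: filter_up)
    next
      fix x y assume "x \<in> \<Union>C" "y \<in> \<Union>C"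
      then obtain G1 G2 where g: "G1 \<in> C" "G2 \<in> C" "x \<in> G1" "y \<in> G2" by auto
      show "inf x y \<in> \<Union>C"
      proof (cases "G1 \<subseteq> G2")
        case True
        then show ?thesis using g CA unfolding A_def by (auto intro: filter_inf)
      next
        case False
        then have "G2 \<subseteq> G1" using ch g by blast
        then show ?thesis using g CA unfolding A_def by (auto intro: filter_inf)
      qed
    qed
    then show ?thesis using that(1) CA unfolding A_def by auto
  qed
  ultimately obtain M where M: "M \<in> A" and mx: "\<forall>X\<in>A. M \<subseteq> X \<longrightarrow> X = M"
    using subset_Zorn_nonempty[of A] by blast
  have fM: "ba_filter M" "F \<subseteq> M" "b \<notin> M" using M unfolding A_def by auto
  define gen where "gen c = {x. \<exists>m\<in>M. inf m c \<le> x}" for c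
  have gen_filter: "ba_filter (gen c)" for c
    unfolding ba_filter_def gen_def
  proof (intro conjI ballI allI impI)
    show "top \<in> {x. \<exists>m\<in>M. inf m c \<le> x}" using filter_top[OF fM(1)] by auto
  next
    fix x y assume "x \<in> {x. \<exists>m\<in>M. inf m c \<le> x}" "x \<le> y"
    then show "y \<in> {x. \<exists>m\<in>M. inf m c \<le> x}" using order_trans by blast
  next
    fix x y assume "x \<in> {x. \<exists>m\<in>M. inf m c \<le> x}" "y \<in> {x. \<exists>m\<in>M. inf m c \<le> x}"
    then obtain m1 m2 where "m1 \<in> M" "m2 \<in> M" "inf m1 c \<le> x" "inf m2 c \<le> y" by auto
    moreover have "inf (inf m1 m2) c \<le> inf m1 c" by (rule inf_mono[OF inf_le1 order_refl])
    moreover have "inf (inf m1 m2) c \<le> inf m2 c" by (rule inf_mono[OF inf_le2 order_refl])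
    ultimately have "inf (inf m1 m2) c \<le> inf x y" "inf m1 m2 \<in> M"
      using filter_inf[OF fM(1)] by (meson le_inf_iff order_trans)+
    then show "inf x y \<in> {x. \<exists>m\<in>M. inf m c \<le> x}" by blast
  qed
  have Msub: "M \<subseteq> gen c" for c unfolding gen_def using inf_le1 by blast
  have cin: "c \<in> gen c" for c unfolding gen_def using filter_top[OF fM(1)] by auto
  have "-c \<in> M" if "c \<notin> M" for c
  proof -
    have "gen c \<notin> A"
    proof
      assume "gen c \<in> A"
      then have "gen c = M" using mx Msub by blast
      then show False using cin that by blast
    qed
    then have "b \<in> gen c" using gen_filter Msub fM unfolding A_def by blast
    then obtain m1 where m1: "m1 \<in> M" "inf m1 c \<le> b" unfolding gen_def by auto
    show ?thesis
    proof (rule ccontr)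
      assume "-c \<notin> M"
      have "gen (-c) \<notin> A"
      proof
        assume "gen (-c) \<in> A"
        then have "gen (-c) = M" using mx Msub by blast
        then show False using cin \<open>-c \<notin> M\<close> by blast
      qed
      then have "b \<in> gen (-c)" using gen_filter Msub fM unfolding A_def by blast
      then obtain m2 where m2: "m2 \<in> M" "inf m2 (-c) \<le> b" unfolding gen_def by auto
      have "inf m1 m2 \<le> b"
      proof -
        have "inf m1 m2 = sup (inf (inf m1 m2) c) (inf (inf m1 m2) (-c))"
          by (simp add: inf_sup_distrib1[symmetric])
        also have "\<dots> \<le> b" using m1(2) m2(2)
          by (metis (no_types, lifting) inf.coboundedI1 inf.coboundedI2 inf_commute inf_left_commute le_supI inf_assoc inf.cobounded1 order_trans le_infI1 le_infI2)
        finally show ?thesis .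
      qed
      then show False using filter_inf[OF fM(1) m1(1) m2(1)] filter_up[OF fM(1)] fM(3) by blast
    qed
  qed
  then show ?thesis using fM by blast
qed

lemma uf_props:
  assumes "u \<in> ultrafilters"
  shows "ba_filter u" "bot \<notin> u" "c \<notin> u \<Longrightarrow> -c \<in> u" "c \<in> u \<Longrightarrow> -c \<notin> u"
proof -
  show fu: "ba_filter u" using assms unfolding ultrafilters_def by auto
  show bu: "bot \<notin> u"
  proof
    assume "bot \<in> u"
    then have "u = UNIV" using filter_up[OF fu, of bot] by auto
    then show False using assms unfolding ultrafilters_def by auto
  qed
  show "-c \<notin> u" if "c \<in> u"
    using filter_inf[OF fu that, of "-c"] bu by auto
  show "-c \<in> u" if "c \<notin> u"
  proof (rule ccontr)
    assume "-c \<notin> u"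
    obtain M where M: "ba_filter M" "u \<subseteq> M" "-c \<notin> M" "\<forall>d. d \<notin> M \<longrightarrow> -d \<in> M"
      using ext_filter[OF fu \<open>-c \<notin> u\<close>] by blast
    have "M \<noteq> UNIV" using M by auto
    then have "M = u" using assms M unfolding ultrafilters_def by blast
    then show False using M that by auto
  qed
qed

lemma uf_exists:
  fixes F :: "'a::boolean_algebra set"
  assumes "ba_filter F" "b \<notin> F"
  shows "\<exists>u\<in>ultrafilters. F \<subseteq> u \<and> b \<notin> u"
proof -
  obtain M where M: "ba_filter M" "F \<subseteq> M" "b \<notin> M" "\<forall>c. c \<notin> M \<longrightarrow> -c \<in> M"
    using ext_filter[OF assms] by blast
  have "M \<in> ultrafilters"
    unfolding ultrafilters_def
  proof (intro CollectI conjI allI impI)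
    show "ba_filter M" "M \<noteq> UNIV" using M by auto
    fix G assume G: "ba_filter G \<and> G \<noteq> UNIV \<and> M \<subseteq> G"
    show "G = M"
    proof (rule ccontr)
      assume "G \<noteq> M"
      then obtain c where "c \<in> G" "c \<notin> M" using G by blast
      then have "-c \<in> G" using M G by blast
      then have "bot \<in> G" using filter_inf[of G c "-c"] G \<open>c \<in> G\<close> by simp
      then have "G = UNIV" using filter_up[of G bot] G by auto
      then show False using G by auto
    qed
  qed
  then show ?thesis using M by blast
qed

lemma phiF_sub:
  fixes F :: "'a::boolean_algebra set"
  assumes "ba_filter F" "phiF F \<subseteq> stone a"
  shows "a \<in> F"
proof (rule ccontr)
  assume "a \<notin> F"
  then obtain u where "u \<in> ultrafilters" "F \<subseteq> u" "a \<notin> u" using uf_exists assms(1) by blast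
  then show False using assms(2) unfolding phiF_def stone_def by blast
qed

lemma stone_le:
  fixes a b :: "'a::boolean_algebra"
  assumes "stone a = stone b" shows "a \<le> b"
proof (rule ccontr)
  assume "\<not> a \<le> b"
  then obtain u where "u \<in> ultrafilters" "{x. a \<le> x} \<subseteq> u" "b \<notin> u"
    using uf_exists[OF principal_filter, of b a] by auto
  then show False using assms unfolding stone_def by auto
qed

lemma stone_inj: "inj (stone :: 'a::boolean_algebra \<Rightarrow> 'a set set)"
  by (rule injI) (metis stone_le order_antisym)

theorem theorem2p10:
  fixes imp :: "'a::boolean_algebra \<Rightarrow> 'a \<Rightarrow> 'a"
  assumes "conditional_algebra imp"
  shows "inj stone \<and>
    (\<forall>a b::'a. stone (inf a b) = stone a \<inter> stone b) \<and>
    (\<forall>a b::'a. stone (sup a b) = stone a \<union> stone b) \<and>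
    (\<forall>a::'a. stone (- a) = ultrafilters - stone a) \<and>
    stone (bot::'a) = {} \<and> stone (top::'a) = ultrafilters \<and>
    (\<forall>a b. stone (imp a b) = imp_T imp (stone a) (stone b))"
proof (intro conjI allI stone_inj)
  have ax1: "imp a top = top" and ax2: "inf (imp a b) (imp a c) = imp a (inf b c)"
    and ax3: "imp (sup a b) c \<le> inf (imp a c) (imp b c)" for a b c
    using assms unfolding conditional_algebra_def by auto
  show "stone (inf a b) = stone a \<inter> stone b" for a b :: 'a
    unfolding stone_def using uf_props(1) filter_inf_iff by blast
  show "stone (sup a b) = stone a \<union> stone b" for a b :: 'a
  proof -
    have "sup a b \<in> u \<longleftrightarrow> a \<in> u \<or> b \<in> u" if u: "u \<in> ultrafilters" for u
    proof
      assume s: "sup a b \<in> u"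
      show "a \<in> u \<or> b \<in> u"
      proof (rule ccontr)
        assume "\<not> (a \<in> u \<or> b \<in> u)"
        then have "-a \<in> u" "-b \<in> u" using uf_props(3)[OF u] by auto
        then have "- sup a b \<in> u" using filter_inf[OF uf_props(1)[OF u]] by simp
        then show False using uf_props(4)[OF u s] by simp
      qed
    next
      assume "a \<in> u \<or> b \<in> u"
      then show "sup a b \<in> u" using filter_up[OF uf_props(1)[OF u]] by auto
    qed
    then show ?thesis unfolding stone_def by auto
  qed
  show "stone (- a) = ultrafilters - stone a" for a :: 'a
    unfolding stone_def using uf_props(3) uf_props(4) by blast
  show "stone (bot::'a) = {}" unfolding stone_def using uf_props(2) by auto
  show "stone (top::'a) = ultrafilters" unfolding stone_def using uf_props(1) filter_top by auto
  show "stone (imp a b) = imp_T imp (stone a) (stone b)" for a b :: 'a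
  proof
    show "stone (imp a b) \<subseteq> imp_T imp (stone a) (stone b)"
    proof
      fix u assume u: "u \<in> stone (imp a b)"
      have "T_img imp u Z \<subseteq> stone b" if "Z \<subseteq> stone a" for Z
      proof
        fix v assume "v \<in> T_img imp u Z"
        then obtain F where F: "ba_filter F" "Z = phiF F" "Dimp imp u F \<subseteq> v" "v \<in> ultrafilters"
          unfolding T_img_def T_rel_def by auto
        have "a \<in> F" using phiF_sub F that by blast
        then have "b \<in> Dimp imp u F" using u unfolding Dimp_def stone_def by auto
        then show "v \<in> stone b" using F unfolding stone_def by auto
      qed
      then show "u \<in> imp_T imp (stone a) (stone b)" using u unfolding imp_T_def stone_def by auto
    qed
  next
    show "imp_T imp (stone a) (stone b) \<subseteq> stone (imp a b)"
    proof
      fix u assume u: "u \<in> imp_T imp (stone a) (stone b)"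
      have uu: "u \<in> ultrafilters" using u unfolding imp_T_def by auto
      have fu: "ba_filter u" using uf_props(1)[OF uu] .
      show "u \<in> stone (imp a b)"
      proof (rule ccontr)
        assume nu: "u \<notin> stone (imp a b)"
        then have nab: "imp a b \<notin> u" using uu unfolding stone_def by auto
        define F where "F = {x. a \<le> x}"
        define D where "D = {c. imp a c \<in> u}"
        have mono: "imp a c \<le> imp a d" if "c \<le> d" for c d
          by (metis ax2 inf.absorb1 inf.cobounded2 that)
        have antimono: "imp x c \<le> imp a c" if "a \<le> x" for x c
          using ax3[of a x c] that by (simp add: sup.absorb2)
        have DF: "Dimp imp u F = D"
          unfolding Dimp_def F_def D_def
        proof (auto)
          fix c x assume "a \<le> x" "imp x c \<in> u"
          then show "imp a c \<in> u" using antimono filter_up[OF fu] by blast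
        qed
        have fD: "ba_filter D" unfolding ba_filter_def D_def
        proof (intro conjI ballI allI impI CollectI)
          show "imp a top \<in> u" using ax1 filter_top[OF fu] by simp
        next
          fix x y assume "x \<in> {c. imp a c \<in> u}" "x \<le> y"
          then show "imp a y \<in> u" using mono[of x y] filter_up[OF fu] by blast
        next
          fix x y assume "x \<in> {c. imp a c \<in> u}" "y \<in> {c. imp a c \<in> u}"
          then have "inf (imp a x) (imp a y) \<in> u" using filter_inf[OF fu] by blast
          then show "imp a (inf x y) \<in> u" by (simp add: ax2)
        qed
        have "b \<notin> D" using nab unfolding D_def by auto
        then obtain v where v: "v \<in> ultrafilters" "D \<subseteq> v" "b \<notin> v" using uf_exists fD by blast
        have pF: "phiF F = stone a" unfolding phiF_def stone_def F_def
          by (auto intro: filter_up[OF uf_props(1)])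
        have "T_rel imp u (phiF F) v" unfolding T_rel_def
          using uu v principal_filter DF F_def by blast
        then have "v \<in> T_img imp u (stone a)" using pF unfolding T_img_def by auto
        moreover have "T_img imp u (stone a) \<subseteq> stone b" using u unfolding imp_T_def by auto
        ultimately show False using v unfolding stone_def by auto
      qed
    qed
  qed
qed

end
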